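(* In the setting of the context, assume (G1), (G2), (G3). Let $M:=(2c_D^2c^2c_1^2)\vee(3cc_2)$, let $k\in\mathbb N$ be such that $M\le M_0^k$ and $\alpha_0^k<1/4$, put $\alpha_M:=\alpha_0^k$, and let $0<\alpha\le\alpha_M$. Let $\eta:=(2c_Dc^3c_1^2c_2)^{-1}$. Then for every $x_0\in X_0$ and $0<r<R_0(x_0)$, every $x\in U(x_0,\alpha r)$ and every closed set $A\subseteq U(x_0,\alpha r)$, $$\varepsilon_x^{A\cup (X\setminus U(x_0,r))}(A)\ \ge\ \eta\,\frac{\operatorname{cap}A}{\operatorname{cap}U(x_0,\alpha r)}.$$
   Context: $(X,\rho)$ is a separable metric space, $X_0\subseteq X$ open; $\mathcal M(X)$ the finite Borel measures (extended to universally measurable sets), $\|\mu\|:=\mu(X)$, $\varepsilon_x$ the Dirac measure. For every open $U\subseteq X$ and $x\in X$ a measure $\mu_x^U\in\mathcal M(X)$ is given such that for all open $U,V$ and all $x$: $\mu_x^U(U)=0$, $\|\mu_x^U\|\le1$, $\mu_x^U=\varepsilon_x$ if $x\notin U$; $y\mapsto\mu_y^U(E)$ is universally measurable for Borel $E$; $\mu_x^U=\int\mu_y^U\,d\mu_x^V(y)$ if $V\subseteq U$. For closed $A$, $\varepsilon_x^A:=\mu_x^{X\setminus A}$. $\mathcal U(X_0)$: open $U$ with $\overline U\subseteq X_0$; $U(x,r)$ open ball; $R_0(x):=\sup\{r>0:\overline{U(x,r)}\subseteq X_0\}$. $G\colon X\times X\to(0,\infty]$ Borel, $G\mu(x):=\int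 G(x,y)d\mu(y)$, $\operatorname{cap}A:=\sup\{\|\mu\|:\mu\in\mathcal M(X),\ \mu(X\setminus A)=0,\ G\mu\le1\}$. (G1): there is $c_1\ge1$ such that for all $U\in\mathcal U(X_0)$, $x\in U$, $\delta>0$, closed $A\subseteq U$ there are a closed neighborhood $B\subseteq U$ of $A$ and a measure $\nu$ carried by $B$ with $\|\varepsilon_x^B\|-\delta<c_1\|\varepsilon_x^A\|$ and $\|\varepsilon_y^A\|\le G\nu(y)\le c_1\|\varepsilon_y^B\|$ for all $y$. (G2): there are a strictly decreasing continuous $g\colon[0,\infty)\to(0,\infty]$ and $c,c_D,M_0\in[1,\infty)$, $\alpha_0\in(0,1)$ with $g(r/2)\le c_Dg(r)$, $M_0g(r)\le g(\alpha_0r)$ for all $r>0$ and $c^{-1}g\circ\rho\le G\le c\,g\circ\rho$. (G3): there is $c_2\ge1$ with $\operatorname{cap}U(x,r)\ge c_2^{-1}g(r)^{-1}$ for all $x\in X_0$, $0<r<R_0(x)$. *)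

theory Defs
  imports "HOL-Probability.Probability"
begin

definition finite_borel :: "'a::topological_space measure \<Rightarrow> bool" where
  "finite_borel \<mu> \<longleftrightarrow> sets \<mu> = sets borel \<and> finite_measure \<mu>"

definition univ_meas_fun :: "('a::topological_space \<Rightarrow> ennreal) \<Rightarrow> bool" where
  "univ_meas_fun f \<longleftrightarrow>
     (\<forall>\<nu>. finite_borel \<nu> \<longrightarrow> f \<in> borel_measurable (completion \<nu>))"

definition kernel_family :: "('a::topological_space set \<Rightarrow> 'a \<Rightarrow> 'a measure) \<Rightarrow> bool" where
  "kernel_family mu \<longleftrightarrow>
     (\<forall>U x. open U \<longrightarrow>
        finite_borel (mu U x) \<and> emeasure (mu U x) U = 0 \<and> emeasure (mu U x) UNIV \<le> 1 \<and>
        (x \<notin> U \<longrightarrow> mu U x = return borel x)) \<and>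
     (\<forall>U E. open U \<and> E \<in> sets borel \<longrightarrow> univ_meas_fun (\<lambda>y. emeasure (mu U y) E)) \<and>
     (\<forall>U V x. open U \<and> open V \<and> V \<subseteq> U \<longrightarrow>
        (\<forall>E\<in>sets borel. emeasure (mu U x) E =
            (\<integral>\<^sup>+ y. emeasure (mu U y) E \<partial>(completion (mu V x)))))"

definition sweep :: "('a set \<Rightarrow> 'a \<Rightarrow> 'a measure) \<Rightarrow> 'a set \<Rightarrow> 'a \<Rightarrow> 'a measure" where
  "sweep mu A x = mu (- A) x"

definition Gpot :: "('a \<Rightarrow> 'a \<Rightarrow> ennreal) \<Rightarrow> 'a measure \<Rightarrow> 'a \<Rightarrow> ennreal" where
  "Gpot G \<mu> x = (\<integral>\<^sup>+ y. G x y \<partial>\<mu>)"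

definition cap :: "('a::topological_space \<Rightarrow> 'a \<Rightarrow> ennreal) \<Rightarrow> 'a set \<Rightarrow> ennreal" where
  "cap G A = (SUP \<mu> \<in> {\<mu>. finite_borel \<mu> \<and> emeasure \<mu> (- A) = 0 \<and> (\<forall>x. Gpot G \<mu> x \<le> 1)}.
                 emeasure \<mu> UNIV)"

definition R0 :: "'a::metric_space set \<Rightarrow> 'a \<Rightarrow> ereal" where
  "R0 X0 x = Sup (ereal ` {r. 0 < r \<and> closure (ball x r) \<subseteq> X0})"

end

theory Submission imports Defs begin

lemma fb_sets: "finite_borel \<mu> \<Longrightarrow> sets \<mu> = sets borel"
  by (simp add: finite_borel_def)
lemma fb_space: "finite_borel \<mu> \<Longrightarrow> space \<mu> = UNIV"
  using sets_eq_imp_space_eq[of \<mu> borel] by (simp add: finite_borel_def)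
lemma fb_finite: "finite_borel \<mu> \<Longrightarrow> finite_measure \<mu>"
  by (simp add: finite_borel_def)

lemma AE_closed_carrier:
  assumes "finite_borel \<mu>" "emeasure \<mu> (- B) = 0" "closed B"
  shows "AE z in \<mu>. z \<in> B"
proof (rule AE_I')
  show "- B \<in> null_sets \<mu>" using assms fb_sets[OF assms(1)]
    by (simp add: null_sets_def open_Compl borel_open)
  show "{z \<in> space \<mu>. \<not> z \<in> B} \<subseteq> - B" by auto
qed

lemma Gpot_lower:
  assumes "finite_borel \<nu>" "emeasure \<nu> (- B) = 0" "closed B" "\<forall>z\<in>B. L \<le> G x z"
  shows "L * emeasure \<nu> UNIV \<le> Gpot G \<nu> x"
proof -
  have "L * emeasure \<nu> UNIV = (\<integral>\<^sup>+ z. L \<partial>\<nu>)" using fb_space[OF assms(1)] by simp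
  also have "\<dots> \<le> (\<integral>\<^sup>+ z. G x z \<partial>\<nu>)"
    by (rule nn_integral_mono_AE) (use AE_closed_carrier[OF assms(1-3)] assms(4) in \<open>auto elim!: AE_mp\<close>)
  finally show ?thesis by (simp add: Gpot_def)
qed

lemma Gpot_upper:
  assumes "finite_borel \<nu>" "emeasure \<nu> (- B) = 0" "closed B" "\<forall>z\<in>B. G y z \<le> L"
  shows "Gpot G \<nu> y \<le> L * emeasure \<nu> UNIV"
proof -
  have "Gpot G \<nu> y \<le> (\<integral>\<^sup>+ z. L \<partial>\<nu>)" unfolding Gpot_def
    by (rule nn_integral_mono_AE) (use AE_closed_carrier[OF assms(1-3)] assms(4) in \<open>auto elim!: AE_mp\<close>)
  also have "\<dots> = L * emeasure \<nu> UNIV" using fb_space[OF assms(1)] by simp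
  finally show ?thesis .
qed

lemma G_sect:
  fixes G :: "'a::second_countable_topology \<Rightarrow> 'a \<Rightarrow> ennreal"
  assumes "case_prod G \<in> borel_measurable borel"
  shows "G x \<in> borel_measurable borel"
proof -
  have G': "case_prod G \<in> borel_measurable (borel \<Otimes>\<^sub>M borel :: ('a\<times>'a) measure)"
    using assms by (simp add: borel_prod)
  show ?thesis using measurable_Pair2[OF G', of x] by simp
qed

lemma cap_le:
  fixes G :: "'a::{metric_space,second_countable_topology} \<Rightarrow> 'a \<Rightarrow> ennreal"
  assumes "closed A" "\<forall>y\<in>A. 1 \<le> Gpot G \<nu> y" "finite_borel \<nu>"
    "case_prod G \<in> borel_measurable borel" "\<forall>x y. G x y \<le> C * G y x"
  shows "cap G A \<le> C * emeasure \<nu> UNIV"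
  unfolding cap_def
proof (rule SUP_least, clarify)
  fix \<mu> assume mu: "finite_borel \<mu>" "emeasure \<mu> (- A) = 0" "\<forall>x. Gpot G \<mu> x \<le> 1"
  interpret pair_sigma_finite \<mu> \<nu>
    using mu(1) assms(3) by (simp add: pair_sigma_finite_def finite_borel_def finite_measure_def)
  have meas: "(\<lambda>(y,z). C * G z y) \<in> borel_measurable (\<mu> \<Otimes>\<^sub>M \<nu>)"
  proof -
    have G': "case_prod G \<in> borel_measurable (borel \<Otimes>\<^sub>M borel :: ('a\<times>'a) measure)"
      using assms(4) by (simp add: borel_prod)
    have sw: "(\<lambda>p. (snd p, fst p)) \<in> measurable (borel \<Otimes>\<^sub>M borel :: ('a\<times>'a) measure) (borel \<Otimes>\<^sub>M borel)"
      by measurable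
    have "(\<lambda>p. G (snd p) (fst p)) \<in> borel_measurable (borel \<Otimes>\<^sub>M borel :: ('a\<times>'a) measure)"
      using measurable_compose[OF sw G'] by (simp add: case_prod_beta' comp_def)
    hence "(\<lambda>p. C * G (snd p) (fst p)) \<in> borel_measurable (borel \<Otimes>\<^sub>M borel :: ('a\<times>'a) measure)"
      by measurable
    moreover have "sets (\<mu> \<Otimes>\<^sub>M \<nu>) = sets (borel \<Otimes>\<^sub>M borel)"
      using fb_sets[OF mu(1)] fb_sets[OF assms(3)] by (intro sets_pair_measure_cong) auto
    ultimately have "(\<lambda>p. C * G (snd p) (fst p)) \<in> borel_measurable (\<mu> \<Otimes>\<^sub>M \<nu>)"
      using measurable_cong_sets[of "\<mu> \<Otimes>\<^sub>M \<nu>" "borel \<Otimes>\<^sub>M borel" borel borel] by blast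
    moreover have "(\<lambda>(y,z). C * G z y) = (\<lambda>p. C * G (snd p) (fst p))" by (rule ext) (simp add: case_prod_beta)
    ultimately show ?thesis by simp
  qed
  have "emeasure \<mu> UNIV = (\<integral>\<^sup>+ y. 1 \<partial>\<mu>)" using fb_space[OF mu(1)] by simp
  also have "\<dots> \<le> (\<integral>\<^sup>+ y. Gpot G \<nu> y \<partial>\<mu>)"
    by (rule nn_integral_mono_AE) (use AE_closed_carrier[OF mu(1) mu(2) assms(1)] assms(2) in \<open>auto elim!: AE_mp\<close>)
  also have "\<dots> \<le> (\<integral>\<^sup>+ y. (\<integral>\<^sup>+ z. C * G z y \<partial>\<nu>) \<partial>\<mu>)"
    unfolding Gpot_def using assms(5) by (intro nn_integral_mono) auto
  also have "\<dots> = (\<integral>\<^sup>+ z. (\<integral>\<^sup>+ y. C * G z y \<partial>\<mu>) \<partial>\<nu>)"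
    using Fubini'[of "\<lambda>y z. C * G z y"] meas by simp
  also have "\<dots> = (\<integral>\<^sup>+ z. C * Gpot G \<mu> z \<partial>\<nu>)"
    unfolding Gpot_def
  proof (intro nn_integral_cong nn_integral_cmult)
    fix z show "G z \<in> borel_measurable \<mu>"
      by (subst measurable_cong_sets[OF fb_sets[OF mu(1)] refl]) (rule G_sect[OF assms(4)])
  qed
  also have "\<dots> \<le> (\<integral>\<^sup>+ z. C \<partial>\<nu>)"
    using mu(3) by (intro nn_integral_mono) (metis mult.right_neutral mult_left_mono zero_le)
  also have "\<dots> = C * emeasure \<nu> UNIV" using fb_space[OF assms(3)] by simp
  finally show "emeasure \<mu> UNIV \<le> C * emeasure \<nu> UNIV" .
qed

lemma decomp:
  assumes kern: "kernel_family mu" and A: "closed A" and A': "closed A'" "A \<subseteq> A'"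
    and K: "\<forall>y\<in>A' - A. emeasure (sweep mu A y) UNIV \<le> K"
  shows "emeasure (sweep mu A x) UNIV \<le> emeasure (sweep mu A' x) A + K"
proof -
  define m where "m = mu (- A') x"
  have k1a: "\<forall>U x. open U \<longrightarrow>
        finite_borel (mu U x) \<and> emeasure (mu U x) U = 0 \<and> emeasure (mu U x) UNIV \<le> 1 \<and>
        (x \<notin> U \<longrightarrow> mu U x = return borel x)"
    using kern unfolding kernel_family_def by (elim conjE)
  note k1 = k1a[rule_format]
  have k3: "emeasure (mu (-A) x) UNIV = (\<integral>\<^sup>+ y. emeasure (mu (-A) y) UNIV \<partial>(completion (mu (-A') x)))"
  proof -
    have "\<forall>U V x. open U \<and> open V \<and> V \<subseteq> U \<longrightarrow>
        (\<forall>E\<in>sets borel. emeasure (mu U x) E =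
            (\<integral>\<^sup>+ y. emeasure (mu U y) E \<partial>(completion (mu V x))))"
      using kern unfolding kernel_family_def by (elim conjE)
    moreover have "open (-A)" "open (-A')" "-A' \<subseteq> -A" using A A' by (auto simp: open_Compl)
    moreover have "UNIV \<in> sets borel" by simp
    ultimately show ?thesis by (elim allE[of _ "-A"] allE[of _ "-A'"] allE[of _ x] impE ballE[of _ _ UNIV]) auto
  qed
  have m: "finite_borel m" "emeasure m (- A') = 0" "emeasure m UNIV \<le> 1"
    using k1[of "-A'" x] A' by (auto simp: m_def open_Compl)
  have AE: "AE y in m. emeasure (mu (-A) y) UNIV \<le> indicator A y + K"
    using AE_closed_carrier[OF m(1) m(2) A'(1)]
  proof (rule AE_mp, intro AE_I2 impI)
    fix y assume y: "y \<in> A'"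
    show "emeasure (mu (-A) y) UNIV \<le> indicator A y + K"
    proof (cases "y \<in> A")
      case True
      then have "mu (-A) y = return borel y" using k1[of "-A" y] A by (auto simp: open_Compl)
      then show ?thesis using True by simp
    next
      case False
      then show ?thesis using K y by (simp add: sweep_def)
    qed
  qed
  have "emeasure (sweep mu A x) UNIV = (\<integral>\<^sup>+ y. emeasure (mu (-A) y) UNIV \<partial>m)"
    using k3 by (simp add: sweep_def m_def nn_integral_completion)
  also have "\<dots> \<le> (\<integral>\<^sup>+ y. indicator A y + K \<partial>m)"
    by (rule nn_integral_mono_AE[OF AE])
  also have "\<dots> = (\<integral>\<^sup>+ y. indicator A y \<partial>m) + (\<integral>\<^sup>+ y. K \<partial>m)"
  proof (rule nn_integral_add)
    show "indicator A \<in> borel_measurable m"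
      by (subst measurable_cong_sets[OF fb_sets[OF m(1)] refl]) (intro borel_measurable_indicator borel_closed A)
  qed auto
  also have "\<dots> = emeasure m A + K * emeasure m UNIV"
    using A fb_sets[OF m(1)] fb_space[OF m(1)] by (simp add: borel_closed)
  also have "\<dots> \<le> emeasure m A + K"
  proof -
    have "K * emeasure m UNIV \<le> K * 1" using m(3) by (rule mult_left_mono) simp
    then show ?thesis by (simp add: add_left_mono)
  qed
  finally show ?thesis by (simp add: sweep_def m_def)
qed

lemma inv_c_mult:
  assumes "0 < c" "ennreal (1/c) * a \<le> b"
  shows "a \<le> ennreal c * b"
proof -
  have "a = ennreal c * (ennreal (1/c) * a)"
    using assms(1) by (simp add: mult.assoc[symmetric] ennreal_mult[symmetric])
  also have "\<dots> \<le> ennreal c * b" using assms(2) by (rule mult_left_mono) simp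
  finally show ?thesis .
qed

lemma inverse_le_ennreal:
  assumes "ennreal q \<le> b" "0 < q"
  shows "inverse b \<le> ennreal (1/q)"
proof (cases b rule: ennreal_cases)
  case (real cb)
  with assms have "q \<le> cb" "0 < cb" by auto
  then have "inverse b = ennreal (1/cb)" using real by (simp add: inverse_ennreal inverse_eq_divide)
  also have "\<dots> \<le> ennreal (1/q)" using \<open>q \<le> cb\<close> assms(2)
    by (intro ennreal_leI) (simp add: frac_le)
  finally show ?thesis .
next
  case top then show ?thesis by simp
qed

lemma g_iter:
  fixes g :: "real \<Rightarrow> ennreal"
  assumes "\<forall>r>0. ennreal M0 * g r \<le> g (\<alpha>0 * r)" "M0 \<ge> 1" "0 < \<alpha>0" "r > 0"
  shows "ennreal (M0 ^ j) * g r \<le> g (\<alpha>0 ^ j * r)"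
proof (induction j)
  case 0 then show ?case by simp
next
  case (Suc j)
  have "ennreal (M0 ^ Suc j) * g r = ennreal M0 * (ennreal (M0 ^ j) * g r)"
    using assms(2) by (simp add: ennreal_mult mult.assoc)
  also have "\<dots> \<le> ennreal M0 * g (\<alpha>0 ^ j * r)" using Suc by (rule mult_left_mono) simp
  also have "\<dots> \<le> g (\<alpha>0 * (\<alpha>0 ^ j * r))" using assms by simp
  finally show ?case by (simp add: mult.assoc)
qed

lemma arith_final:
  fixes \<gamma> \<gamma>2 gr1 grh N eA eB \<epsilon> e c cD c1 c2 M :: real
  assumes c: "c \<ge> 1" and cD: "cD \<ge> 1" and c1: "c1 \<ge> 1" and c2: "c2 \<ge> 1" and N: "N \<ge> 0"
    and pos: "\<gamma> > 0" "\<gamma>2 > 0" "gr1 > 0" "grh > 0" "e > 0"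
    and lowB: "\<gamma>2 / c * N \<le> c1 * eB" and ineq: "eB - e < c1 * eA"
    and decA: "eA \<le> \<epsilon> + c * grh * N"
    and f1: "\<gamma> \<le> cD * \<gamma>2" and f2: "grh \<le> cD * gr1" and f3: "M * gr1 \<le> \<gamma>"
    and f4: "2 * cD^2 * c^2 * c1^2 \<le> M"
  shows "1 / (2 * cD * c^3 * c1^2 * c2) * (c^2 * N * (c2 * \<gamma>)) \<le> \<epsilon> + e"
proof -
  define P where "P = \<gamma> * N"
  have P0: "P \<ge> 0" using pos N by (simp add: P_def)
  have S0: "1 / (2 * cD * c^3 * c1^2 * c2) * (c^2 * N * (c2 * \<gamma>)) = P / (2 * cD * c * c1^2)"
    using c cD c1 c2 by (simp add: P_def field_simps power2_eq_square power3_eq_cube)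
  have S1: "P \<le> cD * c * c1 * eB"
  proof -
    have "P \<le> cD * \<gamma>2 * N" unfolding P_def using f1 N by (rule mult_right_mono)
    also have "\<dots> = cD * c * (\<gamma>2 / c * N)" using c by (simp add: field_simps)
    also have "\<dots> \<le> cD * c * (c1 * eB)" using lowB c cD by (intro mult_left_mono) auto
    finally show ?thesis by (simp add: mult.assoc)
  qed
  have S2: "gr1 * N * (2 * cD^2 * c^2 * c1^2) \<le> P"
  proof -
    have "gr1 * N * (2 * cD^2 * c^2 * c1^2) \<le> gr1 * N * M"
      using f4 pos N by (intro mult_left_mono) auto
    also have "\<dots> = (M * gr1) * N" by simp
    also have "\<dots> \<le> \<gamma> * N" using f3 N by (rule mult_right_mono)
    finally show ?thesis by (simp add: P_def)
  qed
  have S3: "c1^2 * (c * grh * N) \<le> P / (2 * cD * c)"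
  proof -
    have "c1^2 * (c * grh * N) \<le> c1^2 * (c * (cD * gr1) * N)"
      using f2 c N by (intro mult_left_mono mult_right_mono) auto
    also have "\<dots> = gr1 * N * (2 * cD^2 * c^2 * c1^2) / (2 * cD * c)"
      using c cD by (simp add: field_simps power2_eq_square)
    also have "\<dots> \<le> P / (2 * cD * c)" using S2 c cD by (intro divide_right_mono) auto
    finally show ?thesis .
  qed
  have S4: "eB < c1 * eA + e" using ineq by simp
  have "P \<le> cD * c * c1 * eB" by (rule S1)
  also have "\<dots> \<le> cD * c * c1 * (c1 * eA + e)" using S4 c cD c1 by (intro mult_left_mono) auto
  also have "\<dots> = cD * c * (c1^2 * eA) + cD * c * c1 * e" by (simp add: field_simps power2_eq_square)
  also have "\<dots> \<le> cD * c * (c1^2 * \<epsilon> + c1^2 * (c * grh * N)) + cD * c * c1 * e"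
    using decA c cD c1 by (intro add_right_mono mult_left_mono) (auto simp: distrib_left[symmetric])
  also have "\<dots> \<le> cD * c * (c1^2 * \<epsilon> + P / (2 * cD * c)) + cD * c * c1 * e"
    using S3 c cD by (intro add_right_mono mult_left_mono add_left_mono) auto
  also have "\<dots> = cD * c * c1^2 * \<epsilon> + P / 2 + cD * c * c1 * e"
    using c cD by (simp add: field_simps)
  finally have "P / 2 \<le> cD * c * c1^2 * \<epsilon> + cD * c * c1 * e" by simp
  then have "P / (2 * cD * c * c1^2) \<le> \<epsilon> + e / c1"
    using c cD c1 by (simp add: field_simps power2_eq_square)
  also have "\<dots> \<le> \<epsilon> + e" using c1 pos by (simp add: divide_le_eq)
  finally show ?thesis using S0 by simp
qed

theorem proposition4p9:
  fixes mu :: "'a::{metric_space,second_countable_topology} set \<Rightarrow> 'a \<Rightarrow> 'a measure"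
    and G :: "'a \<Rightarrow> 'a \<Rightarrow> ennreal" and X0 :: "'a set"
    and g :: "real \<Rightarrow> ennreal"
    and c c1 c2 cD M0 \<alpha>0 \<alpha> :: real and k :: nat
  assumes kernel: "kernel_family mu"
    and X0_open: "open X0"
    and G_pos: "\<forall>x y. 0 < G x y"
    and G_borel: "case_prod G \<in> borel_measurable borel"
    and G1: "c1 \<ge> 1 \<and>
      (\<forall>U x \<delta> A. open U \<and> closure U \<subseteq> X0 \<and> x \<in> U \<and> \<delta> > 0 \<and> closed A \<and> A \<subseteq> U \<longrightarrow>
         (\<exists>B \<nu>. closed B \<and> A \<subseteq> interior B \<and> B \<subseteq> U \<and>
            finite_borel \<nu> \<and> emeasure \<nu> (- B) = 0 \<and>
            measure (sweep mu B x) UNIV - \<delta> < c1 * measure (sweep mu A x) UNIV \<and>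
            (\<forall>y. emeasure (sweep mu A y) UNIV \<le> Gpot G \<nu> y \<and>
                 Gpot G \<nu> y \<le> ennreal c1 * emeasure (sweep mu B y) UNIV)))"
    and G2: "(\<forall>s t. 0 \<le> s \<and> s < t \<longrightarrow> g t < g s) \<and> continuous_on {0..} g \<and>
      (\<forall>t\<ge>0. 0 < g t) \<and>
      c \<ge> 1 \<and> cD \<ge> 1 \<and> M0 \<ge> 1 \<and> 0 < \<alpha>0 \<and> \<alpha>0 < 1 \<and>
      (\<forall>r>0. g (r / 2) \<le> ennreal cD * g r \<and> ennreal M0 * g r \<le> g (\<alpha>0 * r)) \<and>
      (\<forall>x y. ennreal (1 / c) * g (dist x y) \<le> G x y \<and> G x y \<le> ennreal c * g (dist x y))"
    and G3: "c2 \<ge> 1 \<and>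
      (\<forall>x\<in>X0. \<forall>r. 0 < r \<and> ereal r < R0 X0 x \<longrightarrow>
         ennreal (1 / c2) / g r \<le> cap G (ball x r))"
    and k_M: "max (2 * cD^2 * c^2 * c1^2) (3 * c * c2) \<le> M0 ^ k"
    and k_alpha: "\<alpha>0 ^ k < 1 / 4"
    and alpha: "0 < \<alpha>" "\<alpha> \<le> \<alpha>0 ^ k"
  shows "\<forall>x0\<in>X0. \<forall>r. 0 < r \<and> ereal r < R0 X0 x0 \<longrightarrow>
           (\<forall>x\<in>ball x0 (\<alpha> * r). \<forall>A. closed A \<and> A \<subseteq> ball x0 (\<alpha> * r) \<longrightarrow>
              ennreal (1 / (2 * cD * c^3 * c1^2 * c2)) * (cap G A / cap G (ball x0 (\<alpha> * r)))
                \<le> emeasure (sweep mu (A \<union> - ball x0 r) x) A)"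
proof (intro ballI allI impI, elim conjE)
  fix x0 r x A
  assume x0: "x0 \<in> X0" and r: "0 < r" and rR: "ereal r < R0 X0 x0"
    and x: "x \<in> ball x0 (\<alpha> * r)" and Acl: "closed A" and Asub: "A \<subseteq> ball x0 (\<alpha> * r)"
  from G2 have gdec: "\<And>s t. 0 \<le> s \<Longrightarrow> s < t \<Longrightarrow> g t < g s"
    and gpos: "\<And>t. t \<ge> 0 \<Longrightarrow> 0 < g t"
    and c: "c \<ge> 1" and cD: "cD \<ge> 1" and M0: "M0 \<ge> 1" and a0: "0 < \<alpha>0" "\<alpha>0 < 1"
    and gD: "\<And>r. r > 0 \<Longrightarrow> g (r / 2) \<le> ennreal cD * g r"
    and gM: "\<forall>r>0. ennreal M0 * g r \<le> g (\<alpha>0 * r)"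
    and Glo: "\<And>x y. ennreal (1 / c) * g (dist x y) \<le> G x y"
    and Ghi: "\<And>x y. G x y \<le> ennreal c * g (dist x y)"
    by auto
  from G1 have c1: "c1 \<ge> 1" by simp
  from G3 have c2: "c2 \<ge> 1" by simp
  have gmono: "\<And>s t. 0 \<le> s \<Longrightarrow> s \<le> t \<Longrightarrow> g t \<le> g s"
    using gdec by (metis order.order_iff_strict order.strict_implies_order)
  have gfin: "\<And>t. t > 0 \<Longrightarrow> g t = ennreal (enn2real (g t))"
  proof -
    fix t :: real assume "t > 0"
    then have "g t < g 0" using gdec[of 0 t] by simp
    then have "g t \<noteq> top" using top.not_eq_extremum by fastforce
    then show "g t = ennreal (enn2real (g t))" using ennreal_enn2real[of "g t"] by (simp add: less_top)
  qed
  define gr where "gr t = enn2real (g t)" for t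
  have gr_pos: "\<And>t. t > 0 \<Longrightarrow> 0 < gr t"
    using gpos gfin unfolding gr_def by (metis ennreal_0 ennreal_less_iff less_eq_real_def not_less order_refl)
  have g_gr: "\<And>t. t > 0 \<Longrightarrow> g t = ennreal (gr t)" using gfin unfolding gr_def by blast
  define \<rho> where "\<rho> = \<alpha> * r"
  have \<rho>pos: "0 < \<rho>" using alpha r by (simp add: \<rho>_def)
  have "\<alpha> < 1/4" using alpha k_alpha by linarith
  then have \<rho>r: "\<rho> < r / 4" using r by (simp add: \<rho>_def)
  have clos: "closure (ball x0 \<rho>) \<subseteq> X0"
  proof -
    from rR obtain r' where r': "r' \<in> {r. 0 < r \<and> closure (ball x0 r) \<subseteq> X0}" "ereal r < ereal r'"
      unfolding R0_def by (auto simp: less_Sup_iff)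
    then have "closure (ball x0 \<rho>) \<subseteq> closure (ball x0 r')"
      using \<rho>r r by (intro closure_mono) auto
    then show ?thesis using r' by auto
  qed
  have lhs_fin: "\<And>e::real. 0 < e \<Longrightarrow>
      ennreal (1 / (2 * cD * c^3 * c1^2 * c2)) * (cap G A / cap G (ball x0 (\<alpha> * r)))
        \<le> emeasure (sweep mu (A \<union> - ball x0 r) x) A + ennreal e"
  proof -
    fix e :: real assume e: "0 < e"
    from G1 have "\<exists>B \<nu>. closed B \<and> A \<subseteq> interior B \<and> B \<subseteq> ball x0 \<rho> \<and>
            finite_borel \<nu> \<and> emeasure \<nu> (- B) = 0 \<and>
            measure (sweep mu B x) UNIV - e < c1 * measure (sweep mu A x) UNIV \<and>
            (\<forall>y. emeasure (sweep mu A y) UNIV \<le> Gpot G \<nu> y \<and>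
                 Gpot G \<nu> y \<le> ennreal c1 * emeasure (sweep mu B y) UNIV)"
      using clos x Acl Asub e by (simp add: \<rho>_def)
    then obtain B \<nu> where Bcl: "closed B" and BU: "B \<subseteq> ball x0 \<rho>" and nu: "finite_borel \<nu>"
      and nuB: "emeasure \<nu> (- B) = 0"
      and ineq: "measure (sweep mu B x) UNIV - e < c1 * measure (sweep mu A x) UNIV"
      and Gl: "\<And>y. emeasure (sweep mu A y) UNIV \<le> Gpot G \<nu> y"
      and Gu: "\<And>y. Gpot G \<nu> y \<le> ennreal c1 * emeasure (sweep mu B y) UNIV"
      by blast
    have nufin: "finite_measure \<nu>" using nu fb_finite by blast
    define N where "N = measure \<nu> UNIV"
    have N: "emeasure \<nu> UNIV = ennreal N" "0 \<le> N"
      using finite_measure.emeasure_eq_measure[OF nufin, of UNIV] by (simp_all add: N_def)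
    have kern1: "\<And>U y. open U \<Longrightarrow> finite_borel (mu U y) \<and> emeasure (mu U y) U = 0 \<and>
        emeasure (mu U y) UNIV \<le> 1 \<and> (y \<notin> U \<longrightarrow> mu U y = return borel y)"
    proof -
      have "\<forall>U x. open U \<longrightarrow>
        finite_borel (mu U x) \<and> emeasure (mu U x) U = 0 \<and> emeasure (mu U x) UNIV \<le> 1 \<and>
        (x \<notin> U \<longrightarrow> mu U x = return borel x)"
        using kernel unfolding kernel_family_def by (elim conjE)
      then show "\<And>U y. open U \<Longrightarrow> finite_borel (mu U y) \<and> emeasure (mu U y) U = 0 \<and>
        emeasure (mu U y) UNIV \<le> 1 \<and> (y \<notin> U \<longrightarrow> mu U y = return borel y)" by blast
    qed
    have swfin: "\<And>C y. closed C \<Longrightarrow> finite_measure (sweep mu C y)"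
      using kern1 fb_finite unfolding sweep_def by (meson open_Compl)
    have sw_eq: "\<And>C y E. closed C \<Longrightarrow> emeasure (sweep mu C y) E = ennreal (measure (sweep mu C y) E)"
      using swfin finite_measure.emeasure_eq_measure by blast
    have sw_ge0: "\<And>C y E. 0 \<le> measure (sweep mu C y) E" by simp
    define eA where "eA = measure (sweep mu A x) UNIV"
    define eB where "eB = measure (sweep mu B x) UNIV"
    define A' where "A' = A \<union> - ball x0 r"
    have A'cl: "closed A'" unfolding A'_def using Acl by (intro closed_Un) (auto simp: open_Compl)
    define \<epsilon> where "\<epsilon> = measure (sweep mu A' x) A"
    have Gsym: "\<forall>x y. G x y \<le> ennreal (c^2) * G y x"
    proof (intro allI)
      fix a b
      have "g (dist b a) \<le> ennreal c * G b a" using c by (intro inv_c_mult Glo) auto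
      then have "ennreal c * g (dist a b) \<le> ennreal c * (ennreal c * G b a)"
        by (simp add: dist_commute mult_left_mono)
      also have "\<dots> = ennreal (c^2) * G b a" using c
        by (simp add: power2_eq_square ennreal_mult mult.assoc)
      finally show "G a b \<le> ennreal (c^2) * G b a" using Ghi[of a b] by order
    qed
    have onA: "\<forall>y\<in>A. 1 \<le> Gpot G \<nu> y"
    proof
      fix y assume "y \<in> A"
      then have "sweep mu A y = return borel y" using kern1[of "-A" y] Acl by (auto simp: sweep_def open_Compl)
      then show "1 \<le> Gpot G \<nu> y" using Gl[of y] by simp
    qed
    have capA: "cap G A \<le> ennreal (c^2 * N)"
      using cap_le[OF Acl onA nu G_borel Gsym] N c by (simp add: ennreal_mult)
    have "ennreal (1 / c2) / g \<rho> \<le> cap G (ball x0 \<rho>)"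
    proof -
      have "ereal \<rho> < R0 X0 x0" 
      proof -
        have "ereal \<rho> < ereal r" using \<rho>r r by simp
        then show ?thesis using rR by (rule order.strict_trans)
      qed
      then show ?thesis using G3 x0 \<rho>pos by auto
    qed
    then have capB: "ennreal (1 / c2 / gr \<rho>) \<le> cap G (ball x0 \<rho>)"
      using g_gr[OF \<rho>pos] gr_pos[OF \<rho>pos] c2 by (simp add: divide_ennreal)
    have invB: "inverse (cap G (ball x0 \<rho>)) \<le> ennreal (c2 * gr \<rho>)"
      using inverse_le_ennreal[OF capB] gr_pos[OF \<rho>pos] c2 by simp
    have LHS: "ennreal (1 / (2 * cD * c^3 * c1^2 * c2)) * (cap G A / cap G (ball x0 (\<alpha> * r)))
        \<le> ennreal (1 / (2 * cD * c^3 * c1^2 * c2) * (c^2 * N * (c2 * gr \<rho>)))"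
    proof -
      have "cap G A / cap G (ball x0 (\<alpha> * r)) \<le> ennreal (c^2 * N) * ennreal (c2 * gr \<rho>)"
        unfolding divide_ennreal_def \<rho>_def[symmetric] using capA invB by (intro mult_mono) auto
      then have "ennreal (1 / (2 * cD * c^3 * c1^2 * c2)) * (cap G A / cap G (ball x0 (\<alpha> * r)))
          \<le> ennreal (1 / (2 * cD * c^3 * c1^2 * c2)) * (ennreal (c^2 * N) * ennreal (c2 * gr \<rho>))"
        by (rule mult_left_mono) simp
      moreover have "ennreal (1 / (2 * cD * c^3 * c1^2 * c2)) * ennreal (c^2 * N * (c2 * gr \<rho>))
          = ennreal (1 / (2 * cD * c^3 * c1^2 * c2) * (c^2 * N * (c2 * gr \<rho>)))"
        by (rule ennreal_mult[symmetric]) (use N c c2 cD c1 gr_pos[OF \<rho>pos] in auto)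
      moreover have "ennreal (c^2 * N) * ennreal (c2 * gr \<rho>) = ennreal (c^2 * N * (c2 * gr \<rho>))"
        by (rule ennreal_mult[symmetric]) (use N c c2 gr_pos[OF \<rho>pos] in auto)
      ultimately show ?thesis by simp
    qed
    have lowx: "ennreal (gr (2*\<rho>) / c) * ennreal N \<le> Gpot G \<nu> x"
      unfolding N(1)[symmetric]
    proof (rule Gpot_lower[OF nu nuB Bcl], intro ballI)
      fix z assume "z \<in> B"
      then have d1: "dist x0 z < \<rho>" using BU by auto
      have d2: "dist x0 x < \<rho>" using x by (simp add: \<rho>_def)
      have "dist x z \<le> dist x0 x + dist x0 z" using dist_triangle[of x z x0] by (simp add: dist_commute)
      then have "dist x z < 2 * \<rho>" using d1 d2 by linarith
      then have "g (2*\<rho>) \<le> g (dist x z)" using gmono[of "dist x z" "2*\<rho>"] by simp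
      then have "ennreal (1/c) * g (2*\<rho>) \<le> ennreal (1/c) * g (dist x z)" by (rule mult_left_mono) simp
      also have "\<dots> \<le> G x z" by (rule Glo)
      finally have chain: "ennreal (1/c) * g (2*\<rho>) \<le> G x z" .
      have "ennreal (gr (2*\<rho>) / c) = ennreal (1/c) * ennreal (gr (2*\<rho>))"
        using gr_pos[of "2*\<rho>"] \<rho>pos c by (simp add: ennreal_mult[symmetric])
      then show "ennreal (gr (2*\<rho>) / c) \<le> G x z"
        using chain g_gr[of "2*\<rho>"] \<rho>pos by simp
    qed
    have "ennreal (gr (2*\<rho>) / c * N) \<le> ennreal (c1 * eB)"
    proof -
      have "ennreal (gr (2*\<rho>) / c * N) = ennreal (gr (2*\<rho>) / c) * ennreal N"
        by (rule ennreal_mult) (use gr_pos[of "2*\<rho>"] \<rho>pos c N in auto)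
      also have "\<dots> \<le> ennreal c1 * emeasure (sweep mu B x) UNIV" using lowx Gu[of x] by order
      also have "\<dots> = ennreal (c1 * eB)" using sw_eq[OF Bcl] c1 by (simp add: eB_def ennreal_mult'')
      finally show ?thesis .
    qed
    then have lowB: "gr (2*\<rho>) / c * N \<le> c1 * eB"
      using c1 by (simp add: eB_def ennreal_le_iff)
    have Kb: "\<forall>y\<in>A' - A. emeasure (sweep mu A y) UNIV \<le> ennreal (c * gr (r/2) * N)"
    proof
      fix y assume y: "y \<in> A' - A"
      then have yr: "dist x0 y \<ge> r" unfolding A'_def by auto
      have "Gpot G \<nu> y \<le> ennreal (c * gr (r/2)) * emeasure \<nu> UNIV"
      proof (rule Gpot_upper[OF nu nuB Bcl], intro ballI)
        fix z assume "z \<in> B"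
        then have "dist x0 z < \<rho>" using BU by auto
        moreover have "dist x0 y \<le> dist x0 z + dist y z"
          using dist_triangle[of x0 y z] by (simp add: dist_commute)
        ultimately have "r/2 < dist y z" using yr \<rho>r \<rho>pos by linarith
        then have "g (dist y z) \<le> g (r/2)" using gmono[of "r/2" "dist y z"] r by simp
        then have "G y z \<le> ennreal c * g (r/2)"
          using Ghi[of y z] by (meson mult_left_mono order.trans zero_le)
        then show "G y z \<le> ennreal (c * gr (r/2))"
          using g_gr[of "r/2"] r c gr_pos[of "r/2"] by (simp add: ennreal_mult)
      qed
      then show "emeasure (sweep mu A y) UNIV \<le> ennreal (c * gr (r/2) * N)"
        using Gl[of y] N c gr_pos[of "r/2"] r by (simp add: ennreal_mult)
    qed
    have "emeasure (sweep mu A x) UNIV \<le> emeasure (sweep mu A' x) A + ennreal (c * gr (r/2) * N)"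
      by (rule decomp[OF kernel Acl A'cl _ Kb]) (auto simp: A'_def)
    then have "ennreal eA \<le> ennreal (\<epsilon> + c * gr (r/2) * N)"
      using sw_eq[OF Acl] sw_eq[OF A'cl] c gr_pos[of "r/2"] r N
      by (simp add: eA_def \<epsilon>_def ennreal_plus[symmetric] del: ennreal_plus)
    then have decA: "eA \<le> \<epsilon> + c * gr (r/2) * N"
      using c gr_pos[of "r/2"] r N by (subst (asm) ennreal_le_iff) (simp_all add: \<epsilon>_def)
    have f1: "gr \<rho> \<le> cD * gr (2*\<rho>)"
    proof -
      have "g \<rho> \<le> ennreal cD * g (2*\<rho>)" using gD[of "2*\<rho>"] \<rho>pos by simp
      then show ?thesis using g_gr[of \<rho>] g_gr[of "2*\<rho>"] \<rho>pos cD gr_pos[of "2*\<rho>"]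
        by (simp add: ennreal_mult[symmetric] ennreal_le_iff)
    qed
    have f2: "gr (r/2) \<le> cD * gr r"
    proof -
      have "g (r/2) \<le> ennreal cD * g r" using gD[of r] r by simp
      then show ?thesis using g_gr[of r] g_gr[of "r/2"] r cD gr_pos[of r]
        by (simp add: ennreal_mult[symmetric] ennreal_le_iff)
    qed
    have f3: "M0 ^ k * gr r \<le> gr \<rho>"
    proof -
      have "ennreal (M0 ^ k) * g r \<le> g (\<alpha>0 ^ k * r)" by (rule g_iter[OF gM M0 a0(1) r])
      also have "\<dots> \<le> g \<rho>" using alpha r \<rho>pos unfolding \<rho>_def by (intro gmono) auto
      finally show ?thesis using g_gr[of r] g_gr[of \<rho>] r \<rho>pos M0 gr_pos[of r] gr_pos[of \<rho>]
        by (simp add: ennreal_mult[symmetric] ennreal_le_iff)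
    qed
    have f4: "2 * cD^2 * c^2 * c1^2 \<le> M0 ^ k" using k_M by simp
    have final: "1 / (2 * cD * c^3 * c1^2 * c2) * (c^2 * N * (c2 * gr \<rho>)) \<le> \<epsilon> + e"
      by (rule arith_final[OF c cD c1 c2 N(2) gr_pos[OF \<rho>pos] _ gr_pos[OF r] _ e lowB
          ineq[folded eA_def eB_def] decA f1 f2 f3 f4]) (use \<rho>pos r gr_pos in auto)
    have "ennreal (1 / (2 * cD * c^3 * c1^2 * c2) * (c^2 * N * (c2 * gr \<rho>))) \<le> ennreal (\<epsilon> + e)"
      using final by (rule ennreal_leI)
    also have "\<dots> = emeasure (sweep mu (A \<union> - ball x0 r) x) A + ennreal e"
      using sw_eq[OF A'cl] e by (simp add: \<epsilon>_def A'_def ennreal_plus)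
    finally show "ennreal (1 / (2 * cD * c^3 * c1^2 * c2)) * (cap G A / cap G (ball x0 (\<alpha> * r)))
        \<le> emeasure (sweep mu (A \<union> - ball x0 r) x) A + ennreal e" using LHS by order
  qed
  show "ennreal (1 / (2 * cD * c^3 * c1^2 * c2)) * (cap G A / cap G (ball x0 (\<alpha> * r)))
        \<le> emeasure (sweep mu (A \<union> - ball x0 r) x) A"
    by (rule ennreal_le_epsilon) (rule lhs_fin)
qed

end
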